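(* With $C$, $C^0=C\setminus C(\mathbb F_{p^2})$ and $\mathrm{End}(t)=\{A\in\mathrm{Mat}_3(\mathbb F_{p^2}):A\cdot t\in k\cdot t\}$ for $t\in C^0(k)$ (viewed as a column vector), one has \[\{t\in C^0(k):\mathrm{End}(t)\simeq\mathbb F_{p^6}\}=C^0(\mathbb F_{p^6}).\]
   Context: $k$ is algebraically closed of characteristic $p$ and $C\subset\mathbb P^2$ is the Fermat curve $X_1^{p+1}+X_2^{p+1}+X_3^{p+1}=0$. *)

theory Defs
  imports "HOL-Analysis.Analysis" "HOL-Computational_Algebra.Polynomial"
begin

definition alg_closed :: "'a::field itself \<Rightarrow> bool" where
  "alg_closed _ \<longleftrightarrow> (\<forall>q::'a poly. degree q > 0 \<longrightarrow> (\<exists>x. poly q x = 0))"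

text \<open>The subfield F_q of k (for q a power of the characteristic).\<close>
definition Fq :: "nat \<Rightarrow> 'a::field set" where
  "Fq q = {x. x ^ q = x}"

text \<open>Points of P^2 are represented by nonzero vectors in k^3.
  The projective point of t is F_q-rational iff some representative has coordinates in F_q.\<close>
definition rational_pt :: "nat \<Rightarrow> 'a::field ^ 3 \<Rightarrow> bool" where
  "rational_pt q t \<longleftrightarrow> (\<exists>c. c \<noteq> 0 \<and> (\<forall>i. c * t $ i \<in> Fq q))"

definition on_fermat :: "nat \<Rightarrow> 'a::field ^ 3 \<Rightarrow> bool" where
  "on_fermat p t \<longleftrightarrow> t \<noteq> 0 \<and> (\<Sum>i\<in>UNIV. (t $ i) ^ (p + 1)) = 0"

definition C0 :: "nat \<Rightarrow> 'a::field ^ 3 \<Rightarrow> bool" where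
  "C0 p t \<longleftrightarrow> on_fermat p t \<and> \<not> rational_pt (p ^ 2) t"

definition End_t :: "nat \<Rightarrow> 'a::field ^ 3 \<Rightarrow> ('a ^ 3 ^ 3) set" where
  "End_t p t = {A. (\<forall>i j. A $ i $ j \<in> Fq (p ^ 2)) \<and> (\<exists>c. A *v t = c *s t)}"

definition ring_iso_to :: "('a::field ^ 3 ^ 3) set \<Rightarrow> 'a set \<Rightarrow> bool" where
  "ring_iso_to R S \<longleftrightarrow> (\<exists>\<phi>. bij_betw \<phi> R S \<and>
     (\<forall>A\<in>R. \<forall>B\<in>R. \<phi> (A + B) = \<phi> A + \<phi> B \<and> \<phi> (A ** B) = \<phi> A * \<phi> B))"

end

theory Submission
  imports Defs
begin


definition cr :: "'a::field^3 \<Rightarrow> 'a^3 \<Rightarrow> 'a^3" where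
  "cr x y = vector [x$2*y$3 - x$3*y$2, x$3*y$1 - x$1*y$3, x$1*y$2 - x$2*y$1]"
definition dt :: "'a::field^3 \<Rightarrow> 'a^3 \<Rightarrow> 'a" where
  "dt x y = x$1*y$1 + x$2*y$2 + x$3*y$3"
definition d3 :: "'a::field^3 \<Rightarrow> 'a^3 \<Rightarrow> 'a^3 \<Rightarrow> 'a" where
  "d3 x y z = dt x (cr y z)"

lemma mv3: "((M::'a::field^3^3) *v v)$i = M$i$1 * v$1 + M$i$2 * v$2 + M$i$3 * v$3"
  by (simp add: matrix_vector_mult_def sum_3)

lemma cr_c: "(cr x y)$1 = x$2*y$3 - x$3*y$2" "(cr x y)$2 = x$3*y$1 - x$1*y$3"
  "(cr x y)$3 = x$1*y$2 - x$2*y$1"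
  by (simp_all add: cr_def)

lemmas cs = vec_eq_iff forall_3 cr_c dt_def d3_def mv3 vector_smult_component
  vector_add_component vector_minus_component

lemma L1: assumes "x \<noteq> (0::'a::field^3)" "cr x y = 0" shows "\<exists>l. y = l *s x"
proof -
  from assms(2) have e: "x$2*y$3 = x$3*y$2" "x$3*y$1 = x$1*y$3" "x$1*y$2 = x$2*y$1"
    by (auto simp: cs)
  from assms(1) obtain i where i: "x$i \<noteq> 0" by (auto simp: vec_eq_iff)
  have "y = (y$i / x$i) *s x"
    using i e exhaust_3[of i] unfolding vec_eq_iff forall_3 vector_smult_component
    by (auto simp: field_simps)
  then show ?thesis by blast
qed

lemma L2: assumes "cr x y \<noteq> (0::'a::field^3)" "a *s x + b *s y = 0" shows "a = 0 \<and> b = 0"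
proof -
  have "cr (a *s x + b *s y) y = a *s cr x y" "cr x (a *s x + b *s y) = b *s cr x y"
    by (simp_all add: cs; algebra)+
  moreover have "cr 0 y = 0" "cr x 0 = (0::'a^3)" by (simp_all add: cs)
  ultimately have "a *s cr x y = 0" "b *s cr x y = 0" using assms(2) by simp_all
  then show ?thesis using assms(1) by simp
qed

lemma L3: "cr (cr x y) v = dt x v *s y - dt y v *s (x::'a::field^3)"
  by (simp add: cs; algebra)

lemma L4: assumes "cr x y \<noteq> (0::'a::field^3)" "dt x v = 0" "dt y v = 0"
  shows "\<exists>l. v = l *s cr x y"
  using L1[OF assms(1)] L3[of x y v] assms by simp

lemma L5: "d3 x y z *s (v::'a::field^3) = d3 v y z *s x + d3 x v z *s y + d3 x y v *s z"
  by (simp add: cs; algebra)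

lemma L6: assumes "d3 x y z \<noteq> 0" "a *s x + b *s y + c *s z = (0::'a::field^3)"
  shows "a = 0 \<and> b = 0 \<and> c = 0"
proof -
  have "d3 (a *s x + b *s y + c *s z) y z = a * d3 x y z"
       "d3 x (a *s x + b *s y + c *s z) z = b * d3 x y z"
       "d3 x y (a *s x + b *s y + c *s z) = c * d3 x y z"
    by (simp_all add: cs; algebra)+
  then show ?thesis using assms by (simp add: cs)
qed

lemma L7: assumes "cr x y \<noteq> (0::'a::field^3)" "d3 x y z = 0"
  shows "\<exists>a b. z = a *s x + b *s y"
proof -
  have "\<exists>w. d3 x y w \<noteq> 0"
  proof -
    from assms(1) obtain i where i: "(cr x y)$i \<noteq> 0" by (auto simp: vec_eq_iff)
    have "d3 x y (vector [1,0,0]) = (cr x y)$1" "d3 x y (vector [0,1,0]) = (cr x y)$2"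
      "d3 x y (vector [0,0,1]) = (cr x y)$3" by (simp_all add: cs; algebra)+
    then show ?thesis using i exhaust_3[of i] by metis
  qed
  then obtain w where w: "d3 x y w \<noteq> 0" by blast
  have "d3 x y w *s z = d3 z y w *s x + d3 x z w *s y + d3 x y z *s w" by (rule L5)
  moreover have "d3 x y z = d3 z x y" by (simp add: cs; algebra)
  ultimately have "d3 x y w *s z = d3 z y w *s x + d3 x z w *s y" using assms(2) by simp
  then have "z = (d3 z y w / d3 x y w) *s x + (d3 x z w / d3 x y w) *s y"
  proof -
    assume E: "d3 x y w *s z = d3 z y w *s x + d3 x z w *s y"
    have "z = (1 / d3 x y w) *s (d3 x y w *s z)" using w by (simp add: vector_smult_assoc)
    also have "\<dots> = (d3 z y w / d3 x y w) *s x + (d3 x z w / d3 x y w) *s y"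
      unfolding E by (simp add: vector_add_ldistrib vector_smult_assoc)
    finally show ?thesis .
  qed
  then show ?thesis by blast
qed

lemma mv_lin: "(M::'a::field^3^3) *v (a *s x + b *s y + c *s z) = a *s (M *v x) + b *s (M *v y) + c *s (M *v z)"
  by (simp add: cs; algebra)

lemma mv_sc: "(M::'a::field^3^3) *v (a *s x) = a *s (M *v x)"
  by (simp add: cs; algebra)

lemma L8: assumes "d3 x y z \<noteq> 0" "M *v x = 0" "M *v y = 0" "(M::'a::field^3^3) *v z = 0"
  shows "M = 0"
proof -
  have all: "M *v v = 0" for v
  proof -
    have "d3 x y z *s (M *v v) = M *v (d3 x y z *s v)" by (simp add: mv_sc)
    also have "\<dots> = M *v (d3 v y z *s x + d3 x v z *s y + d3 x y v *s z)" using L5[of x y z v] by simp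
    also have "\<dots> = 0" unfolding mv_lin using assms by simp
    finally show ?thesis using assms(1) by simp
  qed
  have "M$i$j = 0" for i j
  proof -
    have "(M *v (\<chi> k. if k = j then 1 else 0))$i = M$i$j"
      by (simp add: matrix_vector_mult_def if_distrib cong: if_cong)
    then show ?thesis using all by simp
  qed
  then show ?thesis by (simp add: vec_eq_iff)
qed

lemma cyc: "d3 x y z = d3 y z x" "d3 x x z = 0" "d3 x y x = 0" "d3 x y y = 0"
  "dt (cr y z) x = d3 x y z"
  by (simp_all add: cs; algebra)+

lemma L9: assumes D: "d3 v0 v1 v2 \<noteq> 0"
  shows "\<exists>A::'a::field^3^3. A *v v0 = l0 *s v0 \<and> A *v v1 = l1 *s v1 \<and> A *v v2 = l2 *s v2"
proof -
  define D where "D = d3 v0 v1 v2"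
  define w0 where "w0 = (1/D) *s cr v1 v2"
  define w1 where "w1 = (1/D) *s cr v2 v0"
  define w2 where "w2 = (1/D) *s cr v0 v1"
  define A where "A = (\<chi> r s. l0 * v0$r * w0$s + l1 * v1$r * w1$s + l2 * v2$r * w2$s)"
  have gen: "A *v x = (l0 * dt w0 x) *s v0 + (l1 * dt w1 x) *s v1 + (l2 * dt w2 x) *s v2" for x
    unfolding A_def by (simp add: cs; algebra)
  have sc: "dt (c *s u) x = c * dt u x" for c u x by (simp add: cs; algebra)
  have F: "dt w0 v0 = 1" "dt w1 v1 = 1" "dt w2 v2 = 1" "dt w0 v1 = 0" "dt w0 v2 = 0"
    "dt w1 v0 = 0" "dt w1 v2 = 0" "dt w2 v0 = 0" "dt w2 v1 = 0"
    using assms cyc(1)[of v0 v1 v2] cyc(1)[of v1 v2 v0]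
    unfolding w0_def w1_def w2_def sc cyc(5) D_def by (simp_all add: cyc(2,3,4))
  show ?thesis by (rule exI[of _ A]) (simp add: gen F)
qed




definition frob :: "nat \<Rightarrow> 'a::field^3 \<Rightarrow> 'a^3" where "frob q v = (\<chi> i. v$i ^ q)"
definition frobM :: "nat \<Rightarrow> 'a::field^3^3 \<Rightarrow> 'a^3^3" where "frobM q A = (\<chi> i j. A$i$j ^ q)"

lemma frob_c[simp]: "frob q v $ i = v$i ^ q" by (simp add: frob_def)
lemma frobM_c[simp]: "frobM q A $ i $ j = A$i$j ^ q" by (simp add: frobM_def)

lemma frob_comp: "frob b (frob a v) = frob (a*b) v"
  by (simp add: vec_eq_iff power_mult)

lemma frob_zero: "q > 0 \<Longrightarrow> frob q v = 0 \<longleftrightarrow> v = 0"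
  by (simp add: vec_eq_iff)

lemma fix_pow: assumes "(x::'a::field) ^ (p^2) = x" shows "x ^ (p^(2*k)) = x"
proof (induction k)
  case 0 then show ?case by simp
next
  case (Suc k)
  have "x ^ (p^(2*Suc k)) = (x ^ (p^(2*k))) ^ (p^2)"
    by (simp add: power_mult[symmetric] power_add[symmetric] mult.commute)
  then show ?case using Suc assms by simp
qed

lemma frobM_fix: assumes "\<forall>i j. A$i$j \<in> Fq (p^2)" shows "frobM (p^(2*k)) A = (A::'a::field^3^3)"
proof -
  have "A$i$j ^ (p^(2*k)) = A$i$j" for i j
    by (rule fix_pow) (use assms in \<open>simp add: Fq_def\<close>)
  then show ?thesis by (simp add: vec_eq_iff)
qed

context fixes p :: nat assumes pp: "prime p" and cp: "of_nat p = (0::'a::field)"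
begin

lemma frob_add1: "((x::'a) + y) ^ p = x ^ p + y ^ p"
proof -
  have p0: "p > 0" using pp prime_gt_0_nat by blast
  have "(x + y) ^ p = (\<Sum>k\<le>p. of_nat (p choose k) * x ^ k * y ^ (p - k))"
    by (simp add: binomial_ring)
  also have "\<dots> = (\<Sum>k\<in>{0,p}. of_nat (p choose k) * x ^ k * y ^ (p - k))"
  proof (rule sum.mono_neutral_right)
    show "\<forall>i\<in>{..p} - {0, p}. of_nat (p choose i) * x ^ i * y ^ (p - i) = 0"
    proof
      fix i assume i: "i \<in> {..p} - {0, p}"
      then have "p dvd (p choose i)" using dvd_choose_prime pp by auto
      then obtain m where "p choose i = p * m" by blast
      then have "(of_nat (p choose i) :: 'a) = 0" using cp by simp
      then show "of_nat (p choose i) * x ^ i * y ^ (p - i) = 0" by simp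
    qed
  qed auto
  also have "\<dots> = x ^ p + y ^ p" using p0 by (simp add: add.commute)
  finally show ?thesis .
qed

lemma fa: "((x::'a) + y) ^ (p ^ n) = x ^ (p ^ n) + y ^ (p ^ n)"
proof (induction n arbitrary: x y)
  case 0 then show ?case by simp
next
  case (Suc n)
  have "(x + y) ^ (p ^ Suc n) = ((x + y) ^ (p ^ n)) ^ p"
    by (simp add: power_mult[symmetric] mult.commute)
  also have "\<dots> = (x ^ (p^n)) ^ p + (y^(p^n)) ^ p" using Suc frob_add1 by simp
  also have "\<dots> = x ^ (p ^ Suc n) + y ^ (p ^ Suc n)"
    by (simp add: power_mult[symmetric] mult.commute)
  finally show ?case .
qed

lemma fd: "((x::'a) - y) ^ (p ^ n) = x ^ (p ^ n) - y ^ (p ^ n)"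
proof -
  have "x ^ (p^n) = ((x - y) + y) ^ (p^n)" by simp
  also have "\<dots> = (x - y) ^ (p^n) + y ^ (p^n)" by (rule fa)
  finally show ?thesis by simp
qed

lemmas fs = fa fd power_mult_distrib

lemma frob_mv: "frob (p^n) ((M::'a^3^3) *v v) = frobM (p^n) M *v frob (p^n) v"
  by (simp add: vec_eq_iff mv3 fs)

lemma frob_sc: "frob (p^n) (c *s (v::'a^3)) = c^(p^n) *s frob (p^n) v"
  by (simp add: vec_eq_iff fs)

lemma frob_lin2: "frob (p^n) (a *s x + b *s (y::'a^3)) = a^(p^n) *s frob (p^n) x + b^(p^n) *s frob (p^n) y"
  by (simp add: vec_eq_iff fs)

lemma frob_cr: "frob (p^n) (cr x (y::'a^3)) = cr (frob (p^n) x) (frob (p^n) y)"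
  by (simp add: vec_eq_iff forall_3 cr_c fs)

lemma frob_dt: "dt (frob (p^n) x) (frob (p^n) (y::'a^3)) = (dt x y) ^ (p^n)"
  by (simp add: dt_def fs)

lemma frob_d3: "d3 (frob (p^n) x) (frob (p^n) y) (frob (p^n) (z::'a^3)) = (d3 x y z) ^ (p^n)"
  unfolding d3_def frob_cr[symmetric] by (rule frob_dt)

lemma p_pos: "p^n > 0" using pp prime_gt_0_nat by simp

end

lemma norm_rat: assumes "t \<noteq> (0::'a::field^3)" "frob q t = l *s t" shows "rational_pt q t"
proof -
  from assms(1) obtain i where i: "t$i \<noteq> 0" by (auto simp: vec_eq_iff)
  have ti: "t$i ^ q = l * t$i" using assms(2) by (simp add: vec_eq_iff)
  then have l: "l \<noteq> 0" using i by auto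
  have "(1 / t$i * t$j) ^ q = 1 / t$i * t$j" for j
  proof -
    have "t$j ^ q = l * t$j" using assms(2) by (simp add: vec_eq_iff)
    then show ?thesis using ti i l by (simp add: power_divide)
  qed
  then show ?thesis unfolding rational_pt_def Fq_def using i by (intro exI[of _ "1 / t$i"]) auto
qed




lemma VA2: "\<alpha> *s (a *s x) + \<beta> *s (b *s y) = e *s (\<alpha> *s x + \<beta> *s y) \<Longrightarrow>
   (\<alpha>*(a-e)) *s x + (\<beta>*(b-e)) *s y = (0::'a::field^3)"
proof -
  assume H: "\<alpha> *s (a *s x) + \<beta> *s (b *s y) = e *s (\<alpha> *s x + \<beta> *s y)"
  have "(\<alpha>*(a-e)) *s x + (\<beta>*(b-e)) *s y = (\<alpha> *s (a *s x) + \<beta> *s (b *s y)) - e *s (\<alpha> *s x + \<beta> *s y)"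
    by (simp add: vec_eq_iff algebra_simps)
  then show ?thesis using H by simp
qed

lemma VA3: "\<alpha> *s (a *s x) + \<beta> *s (b *s y) + \<gamma> *s (c *s z) = e *s (\<alpha> *s x + \<beta> *s y + \<gamma> *s z) \<Longrightarrow>
   (\<alpha>*(a-e)) *s x + (\<beta>*(b-e)) *s y + (\<gamma>*(c-e)) *s z = (0::'a::field^3)"
proof -
  assume H: "\<alpha> *s (a *s x) + \<beta> *s (b *s y) + \<gamma> *s (c *s z) = e *s (\<alpha> *s x + \<beta> *s y + \<gamma> *s z)"
  have "(\<alpha>*(a-e)) *s x + (\<beta>*(b-e)) *s y + (\<gamma>*(c-e)) *s z =
     (\<alpha> *s (a *s x) + \<beta> *s (b *s y) + \<gamma> *s (c *s z)) - e *s (\<alpha> *s x + \<beta> *s y + \<gamma> *s z)"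
    by (simp add: vec_eq_iff algebra_simps)
  then show ?thesis using H by simp
qed

lemma mv_lin2: "(M::'a::field^3^3) *v (a *s x + b *s y) = a *s (M *v x) + b *s (M *v y)"
  by (simp add: cs; algebra)

lemma EIG:
  assumes A: "A *v x = a *s x" "A *v y = b *s y" "A *v z = e *s (z::'a::field^3)"
    and nz: "x \<noteq> 0" "y \<noteq> 0" "z \<noteq> 0" and d: "a \<noteq> b" "a \<noteq> e" "b \<noteq> e"
  shows "d3 x y z \<noteq> 0"
proof
  assume D: "d3 x y z = 0"
  show False
  proof (cases "cr x y = 0")
    case True
    then obtain l where l: "y = l *s x" using L1 nz by blast
    have "A *v y = a *s y" unfolding l mv_sc A by (simp add: vector_smult_assoc mult.commute)
    then show False using A nz d by simp
  next
    case False
    then obtain \<alpha> \<beta> where z: "z = \<alpha> *s x + \<beta> *s y" using L7 D by blast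
    have z1: "A *v z = \<alpha> *s (a *s x) + \<beta> *s (b *s y)" unfolding z mv_lin2 A(1) A(2) by (rule refl)
    have z2: "A *v z = e *s (\<alpha> *s x + \<beta> *s y)" using A(3) unfolding z .
    have "\<alpha> *s (a *s x) + \<beta> *s (b *s y) = e *s (\<alpha> *s x + \<beta> *s y)" using z1 z2 by (rule trans[OF sym])
    then have "(\<alpha>*(a-e)) *s x + (\<beta>*(b-e)) *s y = 0" by (rule VA2)
    then have "\<alpha>*(a-e) = 0 \<and> \<beta>*(b-e) = 0" using L2 False by blast
    then have "\<alpha> = 0" "\<beta> = 0" using d by auto
    then show False using z nz by simp
  qed
qed

lemma EIG2:
  assumes D: "d3 x y z \<noteq> 0"
    and A: "A *v x = a *s x" "A *v y = b *s y" "A *v z = e *s (z::'a::field^3)" "A *v w = a *s w"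
    and d: "a \<noteq> b" "a \<noteq> e"
  shows "\<exists>l. w = l *s x"
proof -
  define \<alpha> where "\<alpha> = d3 w y z"
  define \<beta> where "\<beta> = d3 x w z"
  define \<gamma> where "\<gamma> = d3 x y w"
  have E: "d3 x y z *s w = \<alpha> *s x + \<beta> *s y + \<gamma> *s z"
    unfolding \<alpha>_def \<beta>_def \<gamma>_def by (rule L5)
  have "A *v (d3 x y z *s w) = a *s (d3 x y z *s w)"
    unfolding mv_sc A(4) vector_smult_assoc by (simp only: mult.commute)
  then have "\<alpha> *s (a *s x) + \<beta> *s (b *s y) + \<gamma> *s (e *s z) = a *s (\<alpha> *s x + \<beta> *s y + \<gamma> *s z)"
    unfolding E mv_lin A(1) A(2) A(3) .
  then have "(\<alpha>*(a-a)) *s x + (\<beta>*(b-a)) *s y + (\<gamma>*(e-a)) *s z = 0" by (rule VA3)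
  then have "\<beta>*(b-a) = 0 \<and> \<gamma>*(e-a) = 0" using L6[OF D] by blast
  then have "\<beta> = 0" "\<gamma> = 0" using d by auto
  then have "d3 x y z *s w = \<alpha> *s x" using E by simp
  then have "w = (\<alpha> / d3 x y z) *s x"
  proof -
    assume E2: "d3 x y z *s w = \<alpha> *s x"
    have "w = (1 / d3 x y z) *s (d3 x y z *s w)" using D by (simp add: vector_smult_assoc)
    also have "\<dots> = (\<alpha> / d3 x y z) *s x" unfolding E2 by (simp add: vector_smult_assoc)
    finally show ?thesis .
  qed
  then show ?thesis by blast
qed



lemma mat_mul: "mat d ** mat e = (mat (d * e) :: 'a::field^3^3)"
  by (simp add: vec_eq_iff forall_3 matrix_matrix_mult_def sum_3 mat_def)

lemma mat_mv: "mat d *v (v::'a::field^3) = d *s v"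
  by (simp add: cs mat_def)

definition mp :: "'a::field^3^3 \<Rightarrow> nat \<Rightarrow> 'a^3^3" where "mp A n = (((**) A) ^^ n) (mat 1)"

lemma mp_Suc: "mp A (Suc n) = A ** mp A n" by (simp add: mp_def)
lemma mp_0: "mp A 0 = mat 1" by (simp add: mp_def)

lemma mp_mat: "mp (mat d) n = (mat (d^n) :: 'a::field^3^3)"
  by (induction n) (simp_all add: mp_0 mp_Suc mat_mul)

lemma mp_mv: assumes a: "A *v t = c *s t" shows "mp A n *v t = c^n *s (t::'a::field^3)"
proof (induction n)
  case 0 show ?case by (simp add: mp_0)
next
  case (Suc n)
  have "mp A (Suc n) *v t = A *v (mp A n *v t)" by (simp add: mp_Suc matrix_vector_mul_assoc)
  also have "\<dots> = c^n *s (A *v t)" unfolding Suc by (rule mv_sc)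
  also have "\<dots> = (c^n * c) *s t" unfolding a by (rule vector_smult_assoc)
  finally show ?case by (simp add: mult.commute)
qed

lemma pw: "((x::'a::field)^(p^a)) ^ (p^b) = x^(p^(a+b))"
  by (simp add: power_mult[symmetric] power_add)

lemma Fq_add: "x \<in> Fq (p^2) \<Longrightarrow> y \<in> Fq (p^2) \<Longrightarrow> prime p \<Longrightarrow> of_nat p = (0::'a::field) \<Longrightarrow> (x::'a) + y \<in> Fq (p^2)"
  using fa[of p x y 2] by (simp add: Fq_def)
lemma Fq_diff: "x \<in> Fq (p^2) \<Longrightarrow> y \<in> Fq (p^2) \<Longrightarrow> prime p \<Longrightarrow> of_nat p = (0::'a::field) \<Longrightarrow> (x::'a) - y \<in> Fq (p^2)"
  using fd[of p x y 2] by (simp add: Fq_def)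
lemma Fq_mult: "x \<in> Fq q \<Longrightarrow> y \<in> Fq q \<Longrightarrow> (x::'a::field) * y \<in> Fq q"
  by (simp add: Fq_def power_mult_distrib)
lemma Fq_0: "0 < q \<Longrightarrow> (0::'a::field) \<in> Fq q" by (simp add: Fq_def)
lemma Fq_1: "(1::'a::field) \<in> Fq q" by (simp add: Fq_def)

context fixes p :: nat assumes pp: "prime p" and cp: "of_nat p = (0::'a::field)"
begin

lemma End_add: assumes a: "A \<in> End_t p t" and b: "B \<in> End_t p t" shows "A + B \<in> End_t p (t::'a^3)"
proof -
  from a obtain c where ca: "A *v t = c *s t" and ea: "\<forall>i j. A$i$j \<in> Fq (p^2)" unfolding End_t_def by blast
  from b obtain d where db: "B *v t = d *s t" and eb: "\<forall>i j. B$i$j \<in> Fq (p^2)" unfolding End_t_def by blast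
  have "(A + B) *v t = (c + d) *s t" by (simp only: matrix_vector_mult_add_rdistrib ca db vector_sadd_rdistrib)
  moreover have "(A + B)$i$j \<in> Fq (p^2)" for i j
    using Fq_add[OF ea[rule_format] eb[rule_format] pp cp] by simp
  ultimately show ?thesis unfolding End_t_def by blast
qed

lemma End_diff: assumes a: "A \<in> End_t p t" and b: "B \<in> End_t p t" shows "A - B \<in> End_t p (t::'a^3)"
proof -
  from a obtain c where ca: "A *v t = c *s t" and ea: "\<forall>i j. A$i$j \<in> Fq (p^2)" unfolding End_t_def by blast
  from b obtain d where db: "B *v t = d *s t" and eb: "\<forall>i j. B$i$j \<in> Fq (p^2)" unfolding End_t_def by blast
  have "(A - B) *v t = (c - d) *s t" by (simp only: matrix_vector_mult_diff_rdistrib ca db vector_sub_rdistrib)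
  moreover have "(A - B)$i$j \<in> Fq (p^2)" for i j
    using Fq_diff[OF ea[rule_format] eb[rule_format] pp cp] by simp
  ultimately show ?thesis unfolding End_t_def by blast
qed

lemma End_mul: "A \<in> End_t p t \<Longrightarrow> B \<in> End_t p t \<Longrightarrow> A ** B \<in> End_t p (t::'a^3)"
proof -
  assume a: "A \<in> End_t p t" and b: "B \<in> End_t p t"
  have e: "(A ** B)$i$j \<in> Fq (p^2)" for i j
  proof -
    have a': "\<forall>i j. A$i$j \<in> Fq (p^2)" and b': "\<forall>i j. B$i$j \<in> Fq (p^2)"
      using a b by (auto simp: End_t_def)
    show ?thesis unfolding matrix_matrix_mult_def sum_3 vec_lambda_beta
      by (intro Fq_add[OF _ _ pp cp] Fq_mult a'[rule_format] b'[rule_format])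
  qed
  from a b obtain c d where ca: "A *v t = c *s t" and db: "B *v t = d *s t" by (auto simp: End_t_def)
  have "(A ** B) *v t = A *v (B *v t)" by (simp add: matrix_vector_mul_assoc)
  also have "\<dots> = A *v (d *s t)" using db by simp
  also have "\<dots> = d *s (A *v t)" by (rule mv_sc)
  also have "\<dots> = (d * c) *s t" using ca by (simp add: vector_smult_assoc)
  finally have "(A ** B) *v t = (d * c) *s t" .
  then show ?thesis using e by (auto simp: End_t_def)
qed

lemma End_mat: "d \<in> Fq (p^2) \<Longrightarrow> mat d \<in> End_t p (t::'a^3)"
proof -
  assume d: "d \<in> Fq (p^2)"
  have z: "(0::'a) \<in> Fq (p^2)" by (rule Fq_0) (rule p_pos[OF pp cp])
  have "(mat d :: 'a^3^3)$i$j \<in> Fq (p^2)" for i j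
    using d z by (simp add: mat_def)
  moreover have "mat d *v t = d *s t" by (rule mat_mv)
  ultimately show ?thesis unfolding End_t_def by blast
qed

lemma End_mp: "A \<in> End_t p t \<Longrightarrow> mp A n \<in> End_t p (t::'a^3)"
proof (induction n)
  case 0 show ?case unfolding mp_0 by (rule End_mat) (rule Fq_1)
next
  case (Suc n) then show ?case unfolding mp_Suc by (intro End_mul)
qed

end




lemma dt_sym: "dt x y = dt y (x::'a::field^3)" by (simp add: dt_def mult.commute)
lemma dt_lin: "dt (a *s x + b *s y) z = a * dt x z + b * dt y (z::'a::field^3)"
  by (simp add: dt_def algebra_simps)
lemma cr_par: "cr (l *s n) (m *s n) = (0::'a::field^3)" by (simp add: cs; algebra)

context fixes p :: nat assumes pp: "prime p" and cp: "of_nat p = (0::'a::field)"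
begin

lemma EX: assumes ac: "alg_closed TYPE('a)" shows "\<exists>c::'a. c^(p^6) = c \<and> c^(p^2) \<noteq> c"
proof -
  have p2: "p \<ge> 2" using pp prime_ge_2_nat by blast
  have h1: "p^2 \<ge> 4" using power_mono[OF p2, of 2] by simp
  have h2: "p^2 < p^4" using power_strict_increasing[of 2 4 p] p2 by simp
  define P1 :: "'a poly" where "P1 = monom 1 (p^4 - 1) + (monom 1 (p^2 - 1) + 1)"
  have dg: "degree (monom (1::'a) (p^2-1) + 1) = p^2 - 1"
    by (subst degree_add_eq_left) (use h1 in \<open>auto simp: degree_monom_eq\<close>)
  have "degree P1 = p^4 - 1" unfolding P1_def
    by (subst degree_add_eq_left) (use dg h1 h2 in \<open>auto simp: degree_monom_eq\<close>)
  then have "degree P1 > 0" using h1 h2 by simp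
  then obtain v where "poly P1 v = 0" using ac unfolding alg_closed_def by blast
  then have v1: "v^(p^4-1) + (v^(p^2-1) + 1) = 0" by (simp add: P1_def poly_monom)
  have v0: "v \<noteq> 0"
  proof
    assume v: "v = 0"
    have "p^4 - 1 \<noteq> 0" "p^2 - 1 \<noteq> 0" using h1 h2 by simp_all
    then obtain m1 m2 where m1: "p^4 - 1 = Suc m1" and m2: "p^2 - 1 = Suc m2" using not0_implies_Suc by blast
    show False using v1 unfolding m1 m2 v by simp
  qed
  define P2 :: "'a poly" where "P2 = monom 1 (p^2) + [:-v, -1:]"
  have "degree P2 = p^2" unfolding P2_def
    by (subst degree_add_eq_left) (use h1 in \<open>auto simp: degree_monom_eq\<close>)
  then have "degree P2 > 0" using h1 p2 by simp
  then obtain c where "poly P2 c = 0" using ac unfolding alg_closed_def by blast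
  then have c2: "c^(p^2) = c + v" by (simp add: P2_def poly_monom algebra_simps)
  have s2: "Suc (p^2-1) = p^2" using h1 by simp
  have "v^(p^2) = v^(Suc (p^2-1))" by (simp only: s2)
  also have "\<dots> = v * v^(p^2-1)" by (rule power_Suc)
  finally have e2: "v^(p^2) = v * v^(p^2-1)" .
  have s4: "Suc (p^4-1) = p^4" using h1 h2 by simp
  have "v^(p^4) = v^(Suc (p^4-1))" by (simp only: s4)
  also have "\<dots> = v * v^(p^4-1)" by (rule power_Suc)
  finally have e4: "v^(p^4) = v * v^(p^4-1)" .
  have "c^(p^4) = (c^(p^2))^(p^2)" using pw[of c p 2 2] by simp
  also have "\<dots> = c + v + v^(p^2)" unfolding c2 fa[OF pp cp] c2 ..
  finally have c4: "c^(p^4) = c + v + v^(p^2)" .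
  have "c^(p^6) = (c^(p^4))^(p^2)" using pw[of c p 4 2] by simp
  also have "\<dots> = c + v + v^(p^2) + v^(p^4)" unfolding c4 fa[OF pp cp] c2 pw[of v p 2 2] by simp
  also have "\<dots> = c + v * (v^(p^4-1) + (v^(p^2-1) + 1))" unfolding e2 e4 by (simp add: algebra_simps)
  also have "\<dots> = c" using v1 by simp
  finally show ?thesis using c2 v0 by auto
qed

lemma EQ: assumes "frobM (p^n) A = A" "A *v t = c *s (t::'a^3)"
  shows "A *v frob (p^n) t = c^(p^n) *s frob (p^n) t"
proof -
  have "A *v frob (p^n) t = frob (p^n) (A *v t)" using frob_mv[OF pp cp, of n A t] assms(1) by simp
  also have "\<dots> = c^(p^n) *s frob (p^n) t" using assms(2) frob_sc[OF pp cp] by simp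
  finally show ?thesis .
qed

lemma FWD: assumes ac: "alg_closed TYPE('a)" and t0: "t \<noteq> (0::'a^3)"
    and iso: "ring_iso_to (End_t p t) (Fq (p^6))" shows "rational_pt (p^6) t"
proof -
  let ?R = "End_t p t" let ?S = "Fq (p^6) :: 'a set"
  from iso obtain \<phi> where bij: "bij_betw \<phi> ?R ?S"
    and hom: "\<forall>A\<in>?R. \<forall>B\<in>?R. \<phi> (A+B) = \<phi> A + \<phi> B \<and> \<phi> (A**B) = \<phi> A * \<phi> B"
    unfolding ring_iso_to_def by blast
  have inj: "inj_on \<phi> ?R" and img: "\<phi> ` ?R = ?S" using bij by (auto simp: bij_betw_def)
  have S_in: "A \<in> ?R \<Longrightarrow> \<phi> A \<in> ?S" for A using img by blast
  have z: "(0::'a) \<in> Fq (p^2)" by (rule Fq_0) (rule p_pos[OF pp cp])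
  have R0: "0 \<in> ?R" using End_mat[OF pp cp z, of t] by simp
  have R1: "mat 1 \<in> ?R" by (rule End_mat[OF pp cp]) (simp add: Fq_1)
  have phi0: "\<phi> 0 = 0" using hom R0 by (metis add_0 add_cancel_right_left)
  have I0: "(mat 1 :: 'a^3^3) \<noteq> 0"
  proof
    assume "(mat 1 :: 'a^3^3) = 0"
    then have "(mat 1 :: 'a^3^3) $ 1 $ 1 = 0" by simp
    then show False by (simp add: mat_def)
  qed
  have phi1: "\<phi> (mat 1) = 1"
  proof -
    have ee: "\<phi> (mat 1) = \<phi> (mat 1) * \<phi> (mat 1)" using hom R1 by (metis matrix_mul_lid)
    have "\<phi> (mat 1) \<noteq> 0" using inj phi0 R0 R1 I0 by (metis inj_onD)
    then show ?thesis using ee by (metis mult_cancel_left1)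
  qed
  have evinj: "N = 0" if N: "N \<in> ?R" "N *v t = 0" for N
  proof (rule ccontr)
    assume N0: "N \<noteq> 0"
    have nz: "\<phi> N \<noteq> 0" using inj phi0 R0 N N0 by (metis inj_onD)
    have "inverse (\<phi> N) \<in> ?S" using S_in[OF N(1)] by (simp add: Fq_def power_inverse)
    then obtain M where M: "M \<in> ?R" "\<phi> M = inverse (\<phi> N)" using img by (metis imageE)
    have "\<phi> (N ** M) = 1" using hom N(1) M nz by simp
    then have "N ** M = mat 1" using inj phi1 End_mul[OF pp cp N(1) M(1)] R1 by (metis inj_onD)
    then have e: "(N ** M) *v t = t" by simp
    obtain m where m: "M *v t = m *s t" using M(1) by (auto simp: End_t_def)
    have "(N ** M) *v t = N *v (M *v t)" by (simp add: matrix_vector_mul_assoc)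
    also have "\<dots> = m *s (N *v t)" using m mv_sc by simp
    finally have "(N ** M) *v t = 0" using N(2) by simp
    then show False using e t0 by simp
  qed
  have mpphi: "A \<in> ?R \<Longrightarrow> \<phi> (mp A n) = \<phi> A ^ n" for A n
  proof (induction n)
    case 0 then show ?case using phi1 by (simp add: mp_0)
  next
    case (Suc n) then show ?case using hom End_mp[OF pp cp] by (simp add: mp_Suc)
  qed
  have pow6: "c^(p^6) = c" if A: "A \<in> ?R" "A *v t = c *s t" for A c
  proof -
    have "\<phi> A ^ (p^6) = \<phi> A" using S_in[OF A(1)] by (simp add: Fq_def)
    then have "\<phi> (mp A (p^6)) = \<phi> A" using mpphi[OF A(1)] by simp
    then have "mp A (p^6) = A" using inj End_mp[OF pp cp A(1)] A(1) by (metis inj_onD)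
    then have "c^(p^6) *s t = c *s t" using mp_mv[OF A(2), of "p^6"] A(2) by metis
    then have "c^(p^6) = c \<or> t = 0" by (simp only: vector_mul_rcancel)
    then show ?thesis using t0 by blast
  qed
  have exA: "\<exists>A c. A \<in> ?R \<and> A *v t = c *s t \<and> c^(p^2) \<noteq> c"
  proof (rule ccontr)
    assume no: "\<not> ?thesis"
    have scal: "A = mat c" if a: "A \<in> ?R" "A *v t = c *s t" for A c
    proof -
      have "c^(p^2) = c" using no a by blast
      then have "mat c \<in> ?R" by (intro End_mat[OF pp cp]) (simp add: Fq_def)
      then have "A - mat c \<in> ?R" using End_diff[OF pp cp] a(1) by blast
      moreover have "(A - mat c) *v t = 0" by (simp add: matrix_vector_mult_diff_rdistrib mat_mv a(2))
      ultimately have "A - mat c = 0" using evinj by blast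
      then show ?thesis by simp
    qed
    obtain c0 :: 'a where c0: "c0^(p^6) = c0" "c0^(p^2) \<noteq> c0" using EX[OF ac] by blast
    have "c0 \<in> ?S" by (simp add: Fq_def c0)
    then obtain M where M: "M \<in> ?R" "\<phi> M = c0" using img by (metis imageE)
    obtain d where d: "M *v t = d *s t" using M(1) by (auto simp: End_t_def)
    have Md: "M = mat d" by (rule scal[OF M(1) d])
    have "d^(p^2) = d" using no M(1) d by blast
    then have "mp M (p^2) = M" using Md by (simp add: mp_mat)
    then have "\<phi> M ^ (p^2) = \<phi> M" using mpphi[OF M(1), of "p^2"] by simp
    then show False using M(2) c0 by simp
  qed
  then obtain A c where A: "A \<in> ?R" "A *v t = c *s t" "c^(p^2) \<noteq> c" by blast
  have c6: "c^(p^6) = c" using pow6 A by blast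
  have Aent: "\<forall>i j. A$i$j \<in> Fq (p^2)" using A(1) by (simp add: End_t_def)
  have F2: "frobM (p^2) A = A" using frobM_fix[OF Aent, of 1] by simp
  have F4: "frobM (p^4) A = A" using frobM_fix[OF Aent, of 2] by simp
  have F6: "frobM (p^6) A = A" using frobM_fix[OF Aent, of 3] by simp
  have e2: "A *v frob (p^2) t = c^(p^2) *s frob (p^2) t" by (rule EQ[OF F2 A(2)])
  have e4: "A *v frob (p^4) t = c^(p^4) *s frob (p^4) t" by (rule EQ[OF F4 A(2)])
  have e6: "A *v frob (p^6) t = c *s frob (p^6) t" using EQ[OF F6 A(2)] c6 by simp
  have nz: "frob (p^n) t \<noteq> 0" for n using frob_zero[OF p_pos[OF pp cp]] t0 by blast
  have d1: "c \<noteq> c^(p^4)"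
  proof
    assume h: "c = c^(p^4)"
    have "c^(p^6) = (c^(p^4))^(p^2)" using pw[of c p 4 2] by simp
    also have "\<dots> = c^(p^2)" by (simp only: h[symmetric])
    finally show False using c6 A(3) by simp
  qed
  have d2: "c^(p^2) \<noteq> c^(p^4)"
  proof
    assume h: "c^(p^2) = c^(p^4)"
    have "c^(p^6) = (c^(p^4))^(p^2)" using pw[of c p 4 2] by simp
    also have "\<dots> = c^(p^4)" using h pw[of c p 2 2] by simp
    finally have "c^(p^6) = c^(p^4)" .
    then show False using c6 A(3) h by metis
  qed
  have "d3 t (frob (p^2) t) (frob (p^4) t) \<noteq> 0"
    by (rule EIG[OF A(2) e2 e4 t0 nz nz]) (use A(3) d1 d2 in auto)
  then have "\<exists>l. frob (p^6) t = l *s t"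
    by (rule EIG2[OF _ A(2) e2 e4 e6]) (use A(3) d1 in auto)
  then show ?thesis using norm_rat t0 by blast
qed

end




lemma sc_comm: "l *s (c *s (t::'a::field^3)) = c *s (l *s t)"
  by (simp add: vector_smult_assoc mult.commute)

lemma End_scale: assumes c: "c \<noteq> 0" shows "End_t p (c *s t) = End_t p (t::'a::field^3)"
proof -
  have "(A *v (c *s t) = l *s (c *s t)) \<longleftrightarrow> (A *v t = l *s t)" for A :: "'a^3^3" and l
  proof -
    have "(A *v (c *s t) = l *s (c *s t)) \<longleftrightarrow> (c *s (A *v t) = c *s (l *s t))"
      by (simp only: mv_sc sc_comm)
    also have "\<dots> \<longleftrightarrow> (A *v t = l *s t)" using c by (simp only: vector_mul_lcancel) simp
    finally show ?thesis .
  qed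
  then show ?thesis unfolding End_t_def by blast
qed

context fixes p :: nat assumes pp: "prime p" and cp: "of_nat p = (0::'a::field)"
begin

lemma BACK: assumes t0: "t \<noteq> (0::'a^3)" and fer: "dt t (frob p t) = 0"
    and nr: "\<not> rational_pt (p^2) t" and fix6: "frob (p^6) t = t"
  shows "ring_iso_to (End_t p t) (Fq (p^6))"
proof -
  define u where "u j = frob (p^j) t" for j
  have ush: "frob (p^m) (u j) = u (j+m)" for m j unfolding u_def frob_comp by (simp add: power_add)
  have ush2: "frob (p^m) (u j) = u k" if "k = j+m" for m j k using ush that by simp
  have f14: "frob (p^1) (u 4) = u 5" by (rule ush2) simp
  have f10: "frob (p^1) (u 0) = u 1" by (rule ush2) simp
  have f12: "frob (p^1) (u 2) = u 3" by (rule ush2) simp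
  have f20: "frob (p^2) (u 0) = u 2" by (rule ush2) simp
  have f22: "frob (p^2) (u 2) = u 4" by (rule ush2) simp
  have f24: "frob (p^2) (u 4) = u 6" by (rule ush2) simp
  have u0: "u 0 = t" by (simp add: u_def vec_eq_iff)
  have u6: "u 6 = t" using fix6 by (simp add: u_def)
  have rel0: "dt (u j) (u (j+1)) = 0" for j
  proof -
    have "u (j+1) = frob (p^j) (frob p t)" by (simp add: u_def frob_comp mult.commute)
    then have "dt (u j) (u (j+1)) = dt t (frob p t) ^ (p^j)" using frob_dt[OF pp cp] u_def by simp
    then show ?thesis using fer p_pos[OF pp cp, of j] by simp
  qed
  have rel: "dt (u j) (u k) = 0" if "k = j+1" for j k using rel0 that by simp
  have nzu: "u j \<noteq> 0" for j unfolding u_def using frob_zero[OF p_pos[OF pp cp]] t0 by blast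
  have dtl: "dt z (a *s x + b *s y) = a * dt z x + b * dt z y" for z x y :: "'a^3" and a b
    by (simp add: dt_def algebra_simps)
  have D: "d3 (u 0) (u 2) (u 4) \<noteq> 0"
  proof
    assume D0: "d3 (u 0) (u 2) (u 4) = 0"
    have c02: "cr (u 0) (u 2) \<noteq> 0"
    proof
      assume "cr (u 0) (u 2) = 0"
      then obtain l where "u 2 = l *s u 0" using L1 nzu by blast
      then have "frob (p^2) t = l *s t" using u0 by (simp add: u_def)
      then show False using norm_rat t0 nr by blast
    qed
    obtain a b where u4: "u 4 = a *s u 0 + b *s u 2" using L7[OF c02 D0] by blast
    have u5: "u 5 = a^p *s u 1 + b^p *s u 3"
    proof -
      have "u 5 = frob (p^1) (u 4)" using f14 by simp
      also have "\<dots> = a^(p^1) *s frob (p^1) (u 0) + b^(p^1) *s frob (p^1) (u 2)"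
        unfolding u4 by (rule frob_lin2[OF pp cp])
      also have "\<dots> = a^p *s u 1 + b^p *s u 3" using f10 f12 by simp
      finally show ?thesis .
    qed
    have r01: "dt (u 0) (u 1) = 0" by (rule rel) simp
    have r12: "dt (u 1) (u 2) = 0" by (rule rel) simp
    have r23: "dt (u 2) (u 3) = 0" by (rule rel) simp
    have r34: "dt (u 3) (u 4) = 0" by (rule rel) simp
    have "dt (u 5) (u 6) = 0" by (rule rel) simp
    then have r50: "dt (u 5) (u 0) = 0" using u6 u0 by simp
    have r10: "dt (u 1) (u 0) = 0" using r01 by (simp add: dt_sym)
    have r32: "dt (u 3) (u 2) = 0" using r23 by (simp add: dt_sym)
    have r21: "dt (u 2) (u 1) = 0" using r12 by (simp add: dt_sym)
    have hb: "b^p * dt (u 3) (u 0) = 0" using r50 r10 unfolding u5 dt_lin by simp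
    have ha: "a * dt (u 3) (u 0) = 0" using r34 r32 unfolding u4 dtl by simp
    have g: "dt (u 0) (u 3) = 0"
    proof (rule ccontr)
      assume ne: "dt (u 0) (u 3) \<noteq> 0"
      then have "dt (u 3) (u 0) \<noteq> 0" by (simp add: dt_sym)
      then have "a = 0" "b^p = 0" using ha hb by auto
      then have "a = 0" "b = 0" by auto
      then have "u 4 = 0" using u4 by simp
      then show False using nzu by blast
    qed
    obtain l1 where l1: "u 1 = l1 *s cr (u 0) (u 2)"
      using L4[OF c02 r01 r21] by blast
    obtain l3 where l3: "u 3 = l3 *s cr (u 0) (u 2)"
      using L4[OF c02 g r23] by blast
    have "cr (u 1) (u 3) = 0" unfolding l1 l3 by (rule cr_par)
    moreover have "cr (u 1) (u 3) = frob (p^1) (cr (u 0) (u 2))"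
      using frob_cr[OF pp cp, of 1 "u 0" "u 2"] f10 f12 by simp
    moreover have "frob (p^1) (cr (u 0) (u 2)) \<noteq> 0" using c02 frob_zero[OF p_pos[OF pp cp]] by blast
    ultimately show False by simp
  qed
  from t0 obtain i where ti: "t$i \<noteq> 0" by (auto simp: vec_eq_iff)
  define \<phi> where "\<phi> A = (A *v t)$i / t$i" for A :: "'a^3^3"
  have phi: "\<phi> A = c" if "A *v t = c *s t" for A c using that ti by (simp add: \<phi>_def)
  let ?R = "End_t p t" let ?S = "Fq (p^6) :: 'a set"
  have Rent: "frobM (p^(2*k)) A = A" if "A \<in> ?R" for A k
    using that by (intro frobM_fix) (simp add: End_t_def)
  have props: "A *v u 2 = c^(p^2) *s u 2 \<and> A *v u 4 = c^(p^4) *s u 4 \<and> c^(p^6) = c"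
    if A: "A \<in> ?R" "A *v t = c *s t" for A c
  proof -
    have f2: "frobM (p^2) A = A" using Rent[OF A(1), of 1] by simp
    have f4: "frobM (p^4) A = A" using Rent[OF A(1), of 2] by simp
    have f6: "frobM (p^6) A = A" using Rent[OF A(1), of 3] by simp
    have x2: "A *v u 2 = c^(p^2) *s u 2" using EQ[OF pp cp f2 A(2)] by (simp add: u_def)
    have x4: "A *v u 4 = c^(p^4) *s u 4" using EQ[OF pp cp f4 A(2)] by (simp add: u_def)
    have "A *v u 6 = c^(p^6) *s u 6" using EQ[OF pp cp f6 A(2)] by (simp add: u_def)
    then have "c *s t = c^(p^6) *s t" using u6 A(2) by metis
    then have "c = c^(p^6) \<or> t = 0" by (simp only: vector_mul_rcancel)
    then show ?thesis using x2 x4 t0 by auto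
  qed
  have inj: "inj_on \<phi> ?R"
  proof (rule inj_onI)
    fix A B assume A: "A \<in> ?R" and B: "B \<in> ?R" and e: "\<phi> A = \<phi> B"
    obtain a where a: "A *v t = a *s t" using A by (auto simp: End_t_def)
    obtain b where b: "B *v t = b *s t" using B by (auto simp: End_t_def)
    have ab: "a = b" using e phi[OF a] phi[OF b] by simp
    have "(A - B) *v u 0 = 0" by (simp add: matrix_vector_mult_diff_rdistrib u0 a b ab)
    moreover have "(A - B) *v u 2 = 0" "(A - B) *v u 4 = 0"
      using props[OF A a] props[OF B b] ab by (simp_all add: matrix_vector_mult_diff_rdistrib)
    ultimately have "A - B = 0" using L8[OF D] by blast
    then show "A = B" by simp
  qed
  have sub: "\<phi> ` ?R \<subseteq> ?S"
  proof
    fix y assume "y \<in> \<phi> ` ?R"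
    then obtain A where A: "A \<in> ?R" "y = \<phi> A" by blast
    obtain a where a: "A *v t = a *s t" using A by (auto simp: End_t_def)
    show "y \<in> ?S" using props[OF A(1) a] phi[OF a] A(2) by (simp add: Fq_def)
  qed
  have sup: "?S \<subseteq> \<phi> ` ?R"
  proof
    fix y assume "y \<in> ?S"
    then have y6: "y^(p^6) = y" by (simp add: Fq_def)
    obtain A where A: "A *v u 0 = y *s u 0" "A *v u 2 = y^(p^2) *s u 2" "A *v u 4 = y^(p^4) *s u 4"
      using L9[OF D] by blast
    define A' where "A' = frobM (p^2) A"
    have s0: "frob (p^2) (u 0) = u 2" using f20 by simp
    have s2: "frob (p^2) (u 2) = u 4" using f22 by simp
    have s4: "frob (p^2) (u 4) = u 0" using f24 u6 u0 by simp
    have key: "A' *v frob (p^2) v = l^(p^2) *s frob (p^2) v" if "A *v v = l *s v" for v l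
    proof -
      have "A' *v frob (p^2) v = frob (p^2) (A *v v)" unfolding A'_def by (rule frob_mv[OF pp cp, symmetric])
      also have "\<dots> = l^(p^2) *s frob (p^2) v" unfolding that by (rule frob_sc[OF pp cp])
      finally show ?thesis .
    qed
    have a2: "A' *v u 2 = y^(p^2) *s u 2" using key[OF A(1)] s0 by simp
    have a4: "A' *v u 4 = y^(p^4) *s u 4" using key[OF A(2)] s2 pw[of y p 2 2] by simp
    have a0: "A' *v u 0 = y *s u 0" using key[OF A(3)] s4 pw[of y p 4 2] y6 by simp
    have "A' - A = 0"
      by (rule L8[OF D]) (simp_all add: matrix_vector_mult_diff_rdistrib a0 a2 a4 A)
    then have "A' = A" by simp
    then have ent: "\<forall>i j. A$i$j \<in> Fq (p^2)" unfolding A'_def by (simp add: vec_eq_iff Fq_def)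
    have At: "A *v t = y *s t" using A(1) u0 by simp
    then have "A \<in> ?R" using ent unfolding End_t_def by blast
    moreover have "\<phi> A = y" by (rule phi[OF At])
    ultimately show "y \<in> \<phi> ` ?R" by blast
  qed
  have hom: "\<forall>A\<in>?R. \<forall>B\<in>?R. \<phi> (A+B) = \<phi> A + \<phi> B \<and> \<phi> (A**B) = \<phi> A * \<phi> B"
  proof (intro ballI conjI)
    fix A B assume A: "A \<in> ?R" and B: "B \<in> ?R"
    obtain a where a: "A *v t = a *s t" using A by (auto simp: End_t_def)
    obtain b where b: "B *v t = b *s t" using B by (auto simp: End_t_def)
    have "(A + B) *v t = (a + b) *s t"
      by (simp only: matrix_vector_mult_add_rdistrib a b vector_sadd_rdistrib)
    then show "\<phi> (A+B) = \<phi> A + \<phi> B" using phi a b by metis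
    have "(A ** B) *v t = A *v (B *v t)" by (simp add: matrix_vector_mul_assoc)
    also have "\<dots> = b *s (A *v t)" unfolding b by (rule mv_sc)
    also have "\<dots> = (a * b) *s t" unfolding a by (simp add: vector_smult_assoc mult.commute)
    finally show "\<phi> (A**B) = \<phi> A * \<phi> B" using phi a b by metis
  qed
  have "bij_betw \<phi> ?R ?S" unfolding bij_betw_def using inj sub sup by blast
  then show ?thesis unfolding ring_iso_to_def using hom by blast
qed

end

theorem lemma3p13:
  fixes p :: nat and t :: "'a::field ^ 3"
  assumes "alg_closed TYPE('a)"
    and "prime p" and "of_nat p = (0::'a)"
    and "C0 p t"
  shows "ring_iso_to (End_t p t) (Fq (p ^ 6)) \<longleftrightarrow> rational_pt (p ^ 6) t"
proof -
  from assms(4) have t0: "t \<noteq> 0" and fer: "(\<Sum>i\<in>UNIV. (t$i)^(p+1)) = 0"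
    and nr: "\<not> rational_pt (p^2) t" unfolding C0_def on_fermat_def by auto
  show ?thesis
  proof
    assume "ring_iso_to (End_t p t) (Fq (p ^ 6))"
    then show "rational_pt (p^6) t" by (rule FWD[OF assms(2) assms(3) assms(1) t0])
  next
    assume "rational_pt (p^6) t"
    then obtain c where c: "c \<noteq> 0" "\<forall>i. c * t$i \<in> Fq (p^6)" unfolding rational_pt_def by blast
    define t' where "t' = c *s t"
    have t'0: "t' \<noteq> 0" using c t0 by (simp add: t'_def)
    have fix6: "frob (p^6) t' = t'" using c(2) by (simp add: t'_def vec_eq_iff Fq_def)
    have "dt t' (frob p t') = c^(p+1) * ((t$1)^(p+1) + (t$2)^(p+1) + (t$3)^(p+1))"
      by (simp add: t'_def dt_def power_mult_distrib algebra_simps)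
    then have fer': "dt t' (frob p t') = 0" using fer by (simp add: sum_3)
    have nr': "\<not> rational_pt (p^2) t'"
    proof
      assume "rational_pt (p^2) t'"
      then obtain d where d: "d \<noteq> 0" "\<forall>i. d * t'$i \<in> Fq (p^2)" unfolding rational_pt_def by blast
      have "d * c \<noteq> 0" "\<forall>i. (d * c) * t$i \<in> Fq (p^2)" using d c by (simp_all add: t'_def mult.assoc)
      then show False using nr unfolding rational_pt_def by blast
    qed
    have "ring_iso_to (End_t p t') (Fq (p^6))" by (rule BACK[OF assms(2,3) t'0 fer' nr' fix6])
    then show "ring_iso_to (End_t p t) (Fq (p ^ 6))" using End_scale[OF c(1)] by (simp add: t'_def)
  qed
qed



end
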